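(* If $f_i=h_i+\overline{g_i}\in S_H$ with $h_i(z)+g_i(z)=\dfrac{z}{1-z}$ for $i=1,2$, then for every $0\le t\le1$ the map $f=tf_1+(1-t)f_2$ belongs to $S_H$ and maps $E$ onto a domain convex in the direction of the imaginary axis.
   Context: $E=\{z\in\mathbb{C}:|z|<1\}$. $S_H$ denotes the class of harmonic, univalent, sense-preserving mappings $f=h+\overline{g}$ of $E$ ($h,g$ analytic, $h'\ne0$, $|g'/h'|<1$) normalized by $f(0)=0$, $f_z(0)=1$. A domain $\Omega$ is convex in the direction of the imaginary axis if every line parallel to the imaginary axis has connected or empty intersection with $\Omega$. *)

theory Defs
  imports "HOL-Analysis.Analysis"
begin

abbreviation unit_disk :: "complex set" where
  "unit_disk \<equiv> ball 0 1"

definition harm :: "(complex \<Rightarrow> complex) \<Rightarrow> (complex \<Rightarrow> complex) \<Rightarrow> complex \<Rightarrow> complex" where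
  "harm h g = (\<lambda>z. h z + cnj (g z))"

definition SH_pair :: "(complex \<Rightarrow> complex) \<Rightarrow> (complex \<Rightarrow> complex) \<Rightarrow> bool" where
  "SH_pair h g \<longleftrightarrow>
     h holomorphic_on unit_disk \<and> g holomorphic_on unit_disk \<and>
     (\<forall>z\<in>unit_disk. deriv h z \<noteq> 0 \<and> norm (deriv g z / deriv h z) < 1) \<and>
     inj_on (harm h g) unit_disk \<and>
     harm h g 0 = 0 \<and> deriv h 0 = 1"

definition S_H :: "(complex \<Rightarrow> complex) set" where
  "S_H = {f. \<exists>h g. SH_pair h g \<and> (\<forall>z\<in>unit_disk. f z = harm h g z)}"

definition convex_imag_dir :: "complex set \<Rightarrow> bool" where
  "convex_imag_dir \<Omega> \<longleftrightarrow> (\<forall>x::real. connected (\<Omega> \<inter> {w. Re w = x}))"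

end

theory Submission
  imports Defs
begin

lemma L1: "cmod (1 - q) < cmod q \<longleftrightarrow> Re q > 1/2"
proof -
  have "cmod (1 - q) < cmod q \<longleftrightarrow> (cmod (1-q))^2 < (cmod q)^2"
    using power_less_imp_less_base[of "cmod (1-q)" 2 "cmod q"] power_strict_mono[of "cmod (1-q)" "cmod q" 2]
    by auto
  also have "\<dots> \<longleftrightarrow> Re q > 1/2" unfolding cmod_power2 by (simp add: power2_eq_square algebra_simps)
  finally show ?thesis .
qed

lemma phi_deriv:
  fixes h g :: "complex \<Rightarrow> complex"
  assumes "h holomorphic_on unit_disk" "g holomorphic_on unit_disk"
    "\<forall>z\<in>unit_disk. h z + g z = z / (1 - z)" "z \<in> unit_disk"
  shows "(deriv h z + deriv g z) * (1 - z)^2 = 1"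
proof -
  have z1: "z \<noteq> 1" using assms(4) by auto
  have d1: "((\<lambda>z. h z + g z) has_field_derivative (deriv h z + deriv g z)) (at z)"
    using assms by (auto intro!: derivative_intros holomorphic_derivI)
  have d2: "((\<lambda>z. z / (1 - z)) has_field_derivative 1 / (1-z)^2) (at z)"
    using z1 by (auto intro!: derivative_eq_intros simp: field_simps power2_eq_square)
  have d3: "((\<lambda>z. z / (1 - z)) has_field_derivative (deriv h z + deriv g z)) (at z)"
    by (rule has_field_derivative_transform_within_open[OF d1 open_ball assms(4)]) (use assms(3) in auto)
  have "deriv h z + deriv g z = 1 / (1-z)^2" using DERIV_unique[OF d3 d2] .
  thus ?thesis using z1 by (simp add: field_simps)
qed

lemma phi_re: assumes "z \<in> unit_disk" shows "Re (z / (1 - z)) > -1/2"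
proof -
  have c: "cmod z < 1" using assms by simp
  have "cmod z ^2 < 1^2" by (rule power_strict_mono) (use c in auto)
  hence n: "Re z ^2 + Im z ^2 < 1" using cmod_power2[of z] by simp
  have "Re z < 1" using c abs_Re_le_cmod[of z] by linarith
  hence D: "(1 - Re z)^2 + (Im z)^2 > 0" by (intro add_pos_nonneg) auto
  have "Re (z / (1 - z)) = (Re z * (1 - Re z) - Im z * Im z) / ((1 - Re z)^2 + (Im z)^2)"
    by (simp add: Re_divide power2_eq_square)
  also have "\<dots> > -1/2"
  proof -
    have "(-1/2) * ((1 - Re z)^2 + (Im z)^2) < Re z * (1 - Re z) - Im z * Im z"
      using n by (simp add: power2_eq_square algebra_simps)
    thus ?thesis using D by (simp add: less_divide_eq)
  qed
  finally show ?thesis .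
qed

lemma pinv_disk: assumes "Re w > -1/2" shows "w / (1 + w) \<in> unit_disk"
proof -
  have w: "1 + w \<noteq> 0" using assms by (auto simp: complex_eq_iff)
  have "(cmod w)^2 < (cmod (1 + w))^2" using assms unfolding cmod_power2 by (simp add: power2_eq_square algebra_simps)
  hence "cmod w < cmod (1 + w)" using power_less_imp_less_base by fastforce
  thus ?thesis using w by (simp add: norm_divide divide_less_eq)
qed

lemma key:
  fixes H G :: "complex \<Rightarrow> complex"
  assumes holH: "H holomorphic_on unit_disk" and holG: "G holomorphic_on unit_disk"
    and sum: "\<forall>z\<in>unit_disk. H z + G z = z/(1-z)"
    and pos: "\<forall>z\<in>unit_disk. Re (deriv H z * (1-z)^2) > 1/2"
  shows "inj_on (harm H G) unit_disk \<and> convex_imag_dir (harm H G ` unit_disk) \<and> continuous_on unit_disk (harm H G)"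
proof -
  define \<psi> where "\<psi> = (\<lambda>z. H z - G z)"
  define pinv where "pinv = (\<lambda>w::complex. w / (1 + w))"
  define line where "line = (\<lambda>x y. complex_of_real x + \<i> * complex_of_real y)"
  have re: "Re (harm H G z) = Re (z/(1-z))" if "z \<in> unit_disk" for z
  proof -
    have "Re (harm H G z) = Re (H z + G z)" by (simp add: harm_def)
    thus ?thesis using sum that by (metis (no_types, lifting))
  qed
  have im: "Im (harm H G z) = Im (\<psi> z)" for z
    by (simp add: harm_def \<psi>_def)
  have inv: "pinv (z/(1-z)) = z" if "z \<in> unit_disk" for z
  proof -
    have "z \<noteq> 1" using that by auto
    thus ?thesis unfolding pinv_def by (simp add: field_simps)
  qed
  have lineRe: "Re (line x y) = x" and lineIm: "Im (line x y) = y" for x y by (simp_all add: line_def)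
  have lineeq: "line (Re w) (Im w) = w" for w by (simp add: line_def complex_eq_iff)
  have pinvD: "pinv w \<in> unit_disk" if "Re w > -1/2" for w
    using pinv_disk[OF that] by (simp add: pinv_def)
  have dpos: "\<exists>D. ((\<lambda>w. \<psi> (pinv w)) has_field_derivative D) (at w) \<and> Re D > 0"
    if w: "Re w > -1/2" for w
  proof -
    define z where "z = pinv w"
    have w1: "1 + w \<noteq> 0" using w by (auto simp: complex_eq_iff)
    have z: "z \<in> unit_disk" using pinvD[OF w] by (simp add: z_def)
    have dp: "(pinv has_field_derivative 1/(1+w)^2) (at w)"
      unfolding pinv_def using w1 by (auto intro!: derivative_eq_intros simp: field_simps power2_eq_square)
    have dpsi: "(\<psi> has_field_derivative (deriv H z - deriv G z)) (at (pinv w))"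
      unfolding \<psi>_def z_def[symmetric] using holH holG z by (auto intro!: derivative_intros holomorphic_derivI)
    have ch: "((\<lambda>w. \<psi> (pinv w)) has_field_derivative (deriv H z - deriv G z) * (1/(1+w)^2)) (at w)"
      by (rule DERIV_chain2[OF dpsi dp])
    have omz: "(1 - z) = 1/(1+w)" unfolding z_def pinv_def using w1 by (simp add: field_simps)
    have pd: "(deriv H z + deriv G z) * (1 - z)^2 = 1" by (rule phi_deriv[OF holH holG sum z])
    have "(deriv H z - deriv G z) * (1/(1+w)^2) = 2 * (deriv H z * (1-z)^2) - 1"
    proof -
      have "deriv G z = (1+w)^2 - deriv H z" using pd w1 unfolding omz
        by (simp add: power_divide field_simps)
      thus ?thesis unfolding omz using w1 by (simp add: field_simps power_divide)
    qed
    moreover have "Re (2 * (deriv H z * (1-z)^2) - 1) > 0"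
    proof -
      have "Re (deriv H z * (1-z)^2) > 1/2" using pos z by blast
      thus ?thesis by simp
    qed
    ultimately show ?thesis using ch by metis
  qed
  define u where "u = (\<lambda>x y. Im (\<psi> (pinv (line x y))))"
  have mono: "u x a < u x b" if x: "x > -1/2" and ab: "a < b" for x a b
  proof (rule DERIV_pos_imp_increasing[OF ab])
    fix y
    have "Re (line x y) > -1/2" using x by (simp add: lineRe)
    then obtain D where D: "((\<lambda>w. \<psi> (pinv w)) has_field_derivative D) (at (line x y))" "Re D > 0"
      using dpos by blast
    have dl: "(line x has_vector_derivative \<i>) (at y)"
      unfolding line_def by (auto intro!: derivative_eq_intros)
    have "(((\<lambda>w. \<psi> (pinv w)) \<circ> line x) has_vector_derivative (\<i> * D)) (at y)"
      by (rule field_vector_diff_chain_at[OF dl D(1)])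
    hence "((\<lambda>y. Im (((\<lambda>w. \<psi> (pinv w)) \<circ> line x) y)) has_field_derivative Im (\<i> * D)) (at y)"
      by (rule has_field_derivative_Im)
    hence "DERIV (u x) y :> Re D" by (simp add: u_def o_def)
    thus "\<exists>y'. DERIV (u x) y :> y' \<and> y' > 0" using D(2) by blast
  qed
  have injp: "inj_on (\<lambda>z. z/(1-z)) unit_disk"
    by (rule inj_on_inverseI[where g=pinv]) (rule inv)
  have inj: "inj_on (harm H G) unit_disk"
  proof (rule inj_onI, rule ccontr)
    fix z1 z2 assume z1: "z1 \<in> unit_disk" and z2: "z2 \<in> unit_disk" and eq: "harm H G z1 = harm H G z2"
      and ne: "z1 \<noteq> z2"
    define w1 where "w1 = z1/(1-z1)"
    define w2 where "w2 = z2/(1-z2)"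
    have rew: "Re w1 = Re w2" using re[OF z1] re[OF z2] eq by (simp add: w1_def w2_def)
    have imp: "Im (\<psi> z1) = Im (\<psi> z2)" using im eq by metis
    have "w1 \<noteq> w2"
    proof
      assume "w1 = w2" hence "pinv w1 = pinv w2" by simp
      thus False using inv[OF z1] inv[OF z2] ne by (simp add: w1_def w2_def)
    qed
    hence imne: "Im w1 \<noteq> Im w2" using rew by (simp add: complex_eq_iff)
    have x: "Re w1 > -1/2" using phi_re[OF z1] by (simp add: w1_def)
    have uk1: "u (Re w1) (Im w1) = Im (\<psi> z1)" unfolding u_def lineeq w1_def using inv[OF z1] by simp
    have uk2: "u (Re w1) (Im w2) = Im (\<psi> z2)" unfolding u_def rew lineeq w2_def using inv[OF z2] by simp
    show False
    proof (cases "Im w1 < Im w2")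
      case True thus False using mono[OF x True] uk1 uk2 imp by simp
    next
      case False hence lt: "Im w2 < Im w1" using imne by simp
      show False using mono[OF x lt] uk1 uk2 imp by simp
    qed
  qed
  have conth: "continuous_on unit_disk (harm H G)"
  proof -
    have "continuous_on unit_disk H" "continuous_on unit_disk G"
      using holH holG by (simp_all add: holomorphic_on_imp_continuous_on)
    thus ?thesis unfolding harm_def by (intro continuous_intros)
  qed
  have cdir: "convex_imag_dir (harm H G ` unit_disk)"
    unfolding convex_imag_dir_def
  proof
    fix x :: real
    show "connected (harm H G ` unit_disk \<inter> {w. Re w = x})"
    proof (cases "x > -1/2")
      case False
      have "harm H G ` unit_disk \<inter> {w. Re w = x} = {}"
      proof (rule ccontr)
        assume "harm H G ` unit_disk \<inter> {w. Re w = x} \<noteq> {}"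
        then obtain z where z: "z \<in> unit_disk" "Re (harm H G z) = x" by blast
        have "Re (z/(1-z)) > -1/2" by (rule phi_re[OF z(1)])
        thus False using re[OF z(1)] z(2) False by linarith
      qed
      thus ?thesis by simp
    next
      case True
      have sub: "pinv (line x y) \<in> unit_disk" for y using True by (intro pinvD) (simp add: lineRe)
      have eqs: "harm H G ` unit_disk \<inter> {w. Re w = x} = (\<lambda>y. harm H G (pinv (line x y))) ` UNIV"
      proof (intro equalityI subsetI)
        fix v assume "v \<in> harm H G ` unit_disk \<inter> {w. Re w = x}"
        then obtain z where z: "z \<in> unit_disk" "v = harm H G z" "Re (harm H G z) = x" by auto
        have "Re (z/(1-z)) = x" using re[OF z(1)] z(3) by simp
        hence "line x (Im (z/(1-z))) = z/(1-z)" using lineeq by metis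
        hence "pinv (line x (Im (z/(1-z)))) = z" using inv[OF z(1)] by simp
        thus "v \<in> (\<lambda>y. harm H G (pinv (line x y))) ` UNIV" using z(2) by (metis rangeI)
      next
        fix v assume "v \<in> (\<lambda>y. harm H G (pinv (line x y))) ` UNIV"
        then obtain y where y: "v = harm H G (pinv (line x y))" by auto
        have "1 + line x y \<noteq> 0" using True by (auto simp: complex_eq_iff lineRe)
        hence "pinv (line x y) / (1 - pinv (line x y)) = line x y"
          unfolding pinv_def by (simp add: field_simps)
        hence "Re v = x" using re[OF sub[of y]] y by (simp add: lineRe)
        thus "v \<in> harm H G ` unit_disk \<inter> {w. Re w = x}" using y sub by auto
      qed
      have cl: "continuous_on UNIV (\<lambda>y. pinv (line x y))"
        unfolding pinv_def line_def using True
      proof (intro continuous_intros ballI)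
        fix y :: real
        have "Re (1 + (complex_of_real x + \<i> * complex_of_real y)) \<noteq> 0" using True by simp
        thus "1 + (complex_of_real x + \<i> * complex_of_real y) \<noteq> 0" by fastforce
      qed
      have "continuous_on UNIV (\<lambda>y. harm H G (pinv (line x y)))"
        by (rule continuous_on_compose2[OF conth cl]) (use sub in auto)
      thus ?thesis unfolding eqs by (rule connected_continuous_image) simp
    qed
  qed
  show ?thesis using inj cdir conth by blast
qed

lemma deriv_comb:
  assumes "h1 holomorphic_on unit_disk" "h2 holomorphic_on unit_disk" "z \<in> unit_disk"
  shows "deriv (\<lambda>z. of_real t * h1 z + of_real (1 - t) * h2 z) z = of_real t * deriv h1 z + of_real (1-t) * deriv h2 z"
  by (rule DERIV_imp_deriv) (use assms in \<open>auto intro!: derivative_eq_intros holomorphic_derivI\<close>)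

lemma pos_i:
  assumes "SH_pair h g" "\<forall>z\<in>unit_disk. h z + g z = z / (1 - z)" "z \<in> unit_disk"
  shows "Re (deriv h z * (1-z)^2) > 1/2"
proof -
  have hh: "h holomorphic_on unit_disk" "g holomorphic_on unit_disk"
    and d: "deriv h z \<noteq> 0" "norm (deriv g z / deriv h z) < 1"
    using assms unfolding SH_pair_def by auto
  have pd: "(deriv h z + deriv g z) * (1 - z)^2 = 1" by (rule phi_deriv[OF hh assms(2,3)])
  have lt: "cmod (deriv g z) < cmod (deriv h z)" using d by (simp add: norm_divide divide_less_eq)
  have z1: "cmod ((1-z)^2) > 0" using assms(3) by auto
  have "cmod (deriv g z * (1-z)^2) < cmod (deriv h z * (1-z)^2)"
    unfolding norm_mult using lt z1 by simp
  moreover have "deriv g z * (1-z)^2 = 1 - deriv h z * (1-z)^2" using pd by (simp add: algebra_simps)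
  ultimately show ?thesis using L1 by metis
qed

theorem corollary2p4:
  fixes h1 g1 h2 g2 :: "complex \<Rightarrow> complex" and t :: real
  assumes "SH_pair h1 g1" "SH_pair h2 g2"
    and "\<forall>z\<in>unit_disk. h1 z + g1 z = z / (1 - z)"
    and "\<forall>z\<in>unit_disk. h2 z + g2 z = z / (1 - z)"
    and "0 \<le> t" "t \<le> 1"
  defines "f \<equiv> (\<lambda>z. of_real t * harm h1 g1 z + of_real (1 - t) * harm h2 g2 z)"
  shows "f \<in> S_H \<and> open (f ` unit_disk) \<and> connected (f ` unit_disk)
         \<and> convex_imag_dir (f ` unit_disk)"
proof -
  define H where "H = (\<lambda>z. of_real t * h1 z + of_real (1 - t) * h2 z)"
  define G where "G = (\<lambda>z. of_real t * g1 z + of_real (1 - t) * g2 z)"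
  have hol: "h1 holomorphic_on unit_disk" "g1 holomorphic_on unit_disk"
    "h2 holomorphic_on unit_disk" "g2 holomorphic_on unit_disk"
    using assms(1,2) unfolding SH_pair_def by auto
  have fH: "f = harm H G" unfolding f_def H_def G_def harm_def
    by (simp add: fun_eq_iff algebra_simps)
  have holH: "H holomorphic_on unit_disk" unfolding H_def using hol
    by (intro holomorphic_intros) auto
  have holG: "G holomorphic_on unit_disk" unfolding G_def using hol
    by (intro holomorphic_intros) auto
  have sum: "\<forall>z\<in>unit_disk. H z + G z = z/(1-z)"
  proof
    fix z :: complex assume z: "z \<in> unit_disk"
    have "H z + G z = of_real t * (h1 z + g1 z) + of_real (1-t) * (h2 z + g2 z)"
      by (simp add: H_def G_def algebra_simps)
    also have "\<dots> = of_real t * (z/(1-z)) + of_real (1-t) * (z/(1-z))" using assms(3,4) z by simp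
    also have "\<dots> = (of_real t + of_real (1-t)) * (z/(1-z))" by (simp only: distrib_right)
    also have "\<dots> = z/(1-z)" by simp
    finally show "H z + G z = z/(1-z)" .
  qed
  have pos: "\<forall>z\<in>unit_disk. Re (deriv H z * (1-z)^2) > 1/2"
  proof
    fix z :: complex assume z: "z \<in> unit_disk"
    have p1: "Re (deriv h1 z * (1-z)^2) > 1/2" by (rule pos_i[OF assms(1,3) z])
    have p2: "Re (deriv h2 z * (1-z)^2) > 1/2" by (rule pos_i[OF assms(2,4) z])
    have "deriv H z * (1-z)^2 = of_real t * (deriv h1 z * (1-z)^2) + of_real (1-t) * (deriv h2 z * (1-z)^2)"
      unfolding H_def deriv_comb[OF hol(1) hol(3) z] by (simp add: algebra_simps)
    hence e: "Re (deriv H z * (1-z)^2) = t * Re (deriv h1 z * (1-z)^2) + (1-t) * Re (deriv h2 z * (1-z)^2)"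
      by simp
    have "t * (Re (deriv h1 z * (1-z)^2) - 1/2) + (1-t) * (Re (deriv h2 z * (1-z)^2) - 1/2) > 0"
    proof (cases "t = 0")
      case True thus ?thesis using p2 by simp
    next
      case False hence "t > 0" using assms(5) by simp
      hence "t * (Re (deriv h1 z * (1-z)^2) - 1/2) > 0" using p1 by simp
      moreover have "(1-t) * (Re (deriv h2 z * (1-z)^2) - 1/2) \<ge> 0" using p2 assms(6) by simp
      ultimately show ?thesis by linarith
    qed
    moreover have eq: "t*(a-1/2)+(1-t)*(b-1/2) = t*a+(1-t)*b - 1/2" for a b :: real
      by (simp add: algebra_simps field_simps)
    ultimately show "Re (deriv H z * (1-z)^2) > 1/2" using e by (metis diff_gt_0_iff_gt)
  qed
  have K: "inj_on (harm H G) unit_disk \<and> convex_imag_dir (harm H G ` unit_disk) \<and> continuous_on unit_disk (harm H G)"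
    by (rule key[OF holH holG sum pos])
  have dcond: "\<forall>z\<in>unit_disk. deriv H z \<noteq> 0 \<and> norm (deriv G z / deriv H z) < 1"
  proof
    fix z :: complex assume z: "z \<in> unit_disk"
    define q where "q = deriv H z * (1-z)^2"
    have pd: "(deriv H z + deriv G z) * (1 - z)^2 = 1" by (rule phi_deriv[OF holH holG sum z])
    have gq: "deriv G z * (1-z)^2 = 1 - q" using pd by (simp add: q_def algebra_simps)
    have lt: "cmod (1 - q) < cmod q" using L1 pos z q_def by blast
    have z1: "(1-z)^2 \<noteq> 0" using z by auto
    have q0: "q \<noteq> 0" using lt by auto
    hence "deriv H z \<noteq> 0" by (simp add: q_def)
    moreover have "deriv G z / deriv H z = (1 - q) / q"
      using z1 q0 gq by (simp add: q_def field_simps)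
    ultimately show "deriv H z \<noteq> 0 \<and> norm (deriv G z / deriv H z) < 1"
      using lt q0 by (simp add: norm_divide divide_less_eq)
  qed
  have h0: "harm H G 0 = 0"
    using assms(1,2) unfolding fH[symmetric] f_def SH_pair_def by simp
  have d0: "deriv H 0 = 1"
    using deriv_comb[OF hol(1) hol(3), of 0 t] assms(1,2) unfolding H_def SH_pair_def by simp
  have SH: "SH_pair H G" unfolding SH_pair_def using holH holG dcond K h0 d0 by blast
  have "f \<in> S_H" unfolding S_H_def fH using SH by blast
  moreover have "open (f ` unit_disk)" unfolding fH
    using K by (intro invariance_of_domain) auto
  moreover have "connected (f ` unit_disk)" unfolding fH
    using K by (intro connected_continuous_image) auto
  ultimately show ?thesis using K fH by simp
qed

end
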